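(* Let $d$ be an integer and $x$ a real number with $0<d\leqslant x/2$. Then $$\sum_{K_d-d<k\leqslant K_d}\Big(d^2\lfloor x/k\rfloor+\frac{2dx}{\lfloor x/k\rfloor}-x^2F(x/k)\Big)=\frac83\,d^2\sqrt{dx}+O(d^{7/2}x^{-1/2})+O(d^2),$$ where $k$ runs over integers, with absolute implied constants.
   Context: $\lfloor\cdot\rfloor$ denotes the integer part. For an integer $d\geqslant 0$ and real $x>0$, $K_d=K_d(x)=\big\lfloor \big(d+\sqrt{d^2+4dx}\,\big)/2\big\rfloor$. For real $t$, $F(t)=\sum_{n>t-1}\frac{1}{n^2(n+1)^2}$, summed over positive integers $n>t-1$. *)

theory Defs
  imports "HOL-Analysis.Analysis"
begin

definition K :: "int \<Rightarrow> real \<Rightarrow> int" where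
  "K d x = \<lfloor>(real_of_int d + sqrt ((real_of_int d)^2 + 4 * real_of_int d * x)) / 2\<rfloor>"

definition F :: "real \<Rightarrow> real" where
  "F t = infsum (\<lambda>n::nat. 1 / ((real n)^2 * (real n + 1)^2)) {n. 0 < n \<and> t - 1 < real n}"

end

theory Submission imports Defs "HOL-Real_Asymp.Real_Asymp" begin

lemma tele:
  fixes a :: "nat \<Rightarrow> real"
  assumes lim: "a \<longlonglongrightarrow> 0" and mono: "\<And>n. n \<ge> m \<Longrightarrow> a (Suc n) \<le> a n"
  shows "((\<lambda>n. a n - a (Suc n)) has_sum a m) {m..}"
proof -
  have g: "(\<lambda>i. a (i + m)) \<longlonglongrightarrow> 0" using LIMSEQ_ignore_initial_segment[OF lim] .
  have s: "(\<lambda>i. a (i + m) - a (Suc i + m)) sums (a (0 + m) - 0)"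
    using telescope_sums'[OF g] by simp
  have h: "((\<lambda>i. a (i + m) - a (Suc (i + m))) has_sum a m) UNIV"
    using sums_nonneg_imp_has_sum[OF s[simplified]] mono by simp
  have img: "(\<lambda>i. i + m) ` UNIV = {m..}"
  proof (auto simp: image_iff)
    fix x assume "m \<le> x" then show "\<exists>xa. x = xa + m" by (intro exI[of _ "x - m"]) simp
  qed
  have "((\<lambda>n. a n - a (Suc n)) has_sum a m) ((\<lambda>i. i + m) ` UNIV)"
    by (subst has_sum_reindex) (auto simp: o_def h)
  then show ?thesis using img by simp
qed

definition ff :: "nat \<Rightarrow> real" where "ff n = 1 / ((real n)^2 * (real n + 1)^2)"

lemma G_bounds:
  assumes m: "m \<ge> 1"
  shows "1 / (3 * real m ^ 3) - 1 / real m ^ 5 \<le> infsum ff {m..}"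
    "infsum ff {m..} \<le> 1 / (3 * real m ^ 3)"
proof -
  define a where "a n = 1 / (3 * real n ^ 3)" for n
  define c where "c n = 1 / (real n ^ 5)" for n
  have alim: "a \<longlonglongrightarrow> 0" unfolding a_def by real_asymp
  have clim: "c \<longlonglongrightarrow> 0" unfolding c_def by real_asymp
  have amono: "a (Suc n) \<le> a n" if "n \<ge> m" for n
    using that m unfolding a_def by (auto simp: divide_simps intro!: power_mono)
  have cmono: "c (Suc n) \<le> c n" if "n \<ge> m" for n
    using that m unfolding c_def by (auto simp: divide_simps intro!: power_mono)
  have Ta: "((\<lambda>n. a n - a (Suc n)) has_sum a m) {m..}" by (rule tele[OF alim amono])
  have Tc: "((\<lambda>n. c n - c (Suc n)) has_sum c m) {m..}" by (rule tele[OF clim cmono])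
  have e_id: "a n - a (Suc n) - ff n = 1 / (3 * real n ^ 3 * (real n + 1) ^ 3)" if "n \<ge> 1" for n
    using that unfolding a_def ff_def by (simp add: field_simps) algebra
  have e_nonneg: "0 \<le> a n - a (Suc n) - ff n" if "n \<ge> 1" for n
    using e_id[OF that] by simp
  have e_le: "a n - a (Suc n) - ff n \<le> c n - c (Suc n)" if "n \<ge> 1" for n
  proof -
    have n: "real n \<ge> 1" using that by simp
    have "1 / (3 * real n ^ 3 * (real n + 1) ^ 3) \<le> 1 / real n ^ 5 - 1 / (real n + 1) ^ 5"
      
    proof -
      define y where "y = real n"
      have y: "y \<ge> 1" using n y_def by simp
      have id: "3*((y+1)^5 - y^5) - y^2*(y+1)^2 = 14*y^4+28*y^3+29*y^2+15*y+3" by algebra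
      have "0 \<le> 14*y^4+28*y^3+29*y^2+15*y+3" using y by simp
      then have "y^2*(y+1)^2 \<le> 3*((y+1)^5 - y^5)" using id by linarith
      then have "y^5*(y+1)^5 \<le> 3*y^3*(y+1)^3 * ((y+1)^5 - y^5)"
        using y mult_left_mono[of "y^2*(y+1)^2" "3*((y+1)^5 - y^5)" "y^3*(y+1)^3"]
        by (simp add: algebra_simps power_add[symmetric] eval_nat_numeral)
      then have "1 / (3 * y ^ 3 * (y + 1) ^ 3) \<le> 1 / y ^ 5 - 1 / (y + 1) ^ 5"
        using y by (simp add: field_simps)
      then show ?thesis by (simp add: y_def)
    qed
    then show ?thesis using e_id[OF that] unfolding c_def by (simp add: add.commute)
  qed
  have ffnn: "0 \<le> ff n" for n unfolding ff_def by simp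
  have summ: "ff summable_on {m..}"
    by (rule summable_on_comparison_test[OF has_sum_imp_summable[OF Ta]]) (use e_nonneg m ffnn in auto)
  have Gs: "(ff has_sum infsum ff {m..}) {m..}" using summ by simp
  show "infsum ff {m..} \<le> 1 / (3 * real m ^ 3)"
    using has_sum_mono[OF Gs Ta] e_nonneg m unfolding a_def by fastforce
  have E: "((\<lambda>n. (a n - a (Suc n)) + - ff n) has_sum (a m + - infsum ff {m..})) {m..}"
    by (intro has_sum_add Ta has_sum_uminus[THEN iffD2]) (simp add: Gs)
  have "a m + - infsum ff {m..} \<le> c m"
    using has_sum_mono[OF E Tc] e_le m by fastforce
  then show "1 / (3 * real m ^ 3) - 1 / real m ^ 5 \<le> infsum ff {m..}"
    unfolding a_def c_def by simp
qed
lemma per_term: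
  fixes a b m G :: real
  assumes a: "a > 0" and b: "b > 0" and ab: "a \<le> b" and m: "m \<ge> 1"
    and dist: "\<bar>m - b / a\<bar> \<le> 2" and m03: "b / a \<le> 3 * m"
    and G1: "1 / (3 * m ^ 3) - 1 / m ^ 5 \<le> G" and G2: "G \<le> 1 / (3 * m ^ 3)"
  shows "\<bar>a^4 * m + 2 * a^2 * b^2 / m - b^4 * G - 8 / 3 * a^3 * b\<bar> \<le> 400 * a^5 / b"
proof -
  define m0 where "m0 = b / a"
  have m0pos: "m0 > 0" using a b by (simp add: m0_def)
  have bm0: "b = a * m0" using a by (simp add: m0_def)
  define phi where "phi = a^4 * m + 2 * a^2 * b^2 / m - b^4 / (3 * m^3)"
  have e1: "\<bar>a^4 * m + 2 * a^2 * b^2 / m - b^4 * G - phi\<bar> \<le> b^4 / m^5"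
  proof -
    have "b^4 * G \<le> b^4 / (3 * m^3)" using G2 mult_left_mono[OF G2, of "b^4"] by simp
    moreover have "b^4 * (1 / (3 * m ^ 3) - 1 / m ^ 5) \<le> b^4 * G"
      using G1 by (intro mult_left_mono) auto
    ultimately show ?thesis unfolding phi_def by (simp add: algebra_simps abs_le_iff)
  qed
  have e2: "b^4 / m^5 \<le> 243 * a^5 / b"
  proof -
    have "m0^5 \<le> (3*m)^5" using m03 m0pos by (intro power_mono) (auto simp: m0_def)
    then have "b^5 \<le> 243 * a^5 * m^5" using a by (simp add: bm0 power_mult_distrib)
    then show ?thesis using a b m by (simp add: field_simps eval_nat_numeral)
  qed
  have id: "phi - 8 / 3 * a^3 * b = a^4 * (m - m0)^3 * (3*m + m0) / (3 * m^3)"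
    unfolding phi_def bm0 using m a by (simp add: field_simps) algebra
  have w3: "\<bar>m - m0\<bar>^3 \<le> 8"
    using dist power_mono[of "\<bar>m - m0\<bar>" 2 3] by (simp add: m0_def)
  have "\<bar>phi - 8 / 3 * a^3 * b\<bar> = a^4 * \<bar>m - m0\<bar>^3 * (3*m + m0) / (3 * m^3)"
    using m m0pos unfolding id by (simp add: abs_mult power_abs)
  also have "\<dots> \<le> a^4 * 8 * (6 * m) / (3 * m^3)"
    using m m0pos m03 w3 by (intro divide_right_mono mult_mono) (auto simp: m0_def)
  also have "\<dots> = 16 * a^4 / m^2" using m by (simp add: field_simps eval_nat_numeral)
  also have "\<dots> \<le> 144 * a^4 / m0^2"
  proof -
    have "m0^2 \<le> (3*m)^2" using m03 m0pos by (intro power_mono) (auto simp: m0_def)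
    then show ?thesis using m m0pos a by (simp add: field_simps)
  qed
  also have "\<dots> = 144 * a^6 / b^2" using a by (simp add: bm0 field_simps eval_nat_numeral)
  also have "\<dots> \<le> 144 * a^5 / b"
  proof -
    have "a^6 * b \<le> a^5 * b^2" using ab a b
      by (simp add: eval_nat_numeral mult_left_mono mult.assoc)
    then show ?thesis using b by (simp add: field_simps)
  qed
  finally have e3: "\<bar>phi - 8 / 3 * a^3 * b\<bar> \<le> 144 * a^5 / b" .
  have "\<bar>a^4 * m + 2 * a^2 * b^2 / m - b^4 * G - 8 / 3 * a^3 * b\<bar>
      \<le> \<bar>a^4 * m + 2 * a^2 * b^2 / m - b^4 * G - phi\<bar> + \<bar>phi - 8 / 3 * a^3 * b\<bar>" by simp
  also have "\<dots> \<le> 387 * a^5 / b" proof -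
    have "387 * a^5 / b = 243 * a^5 / b + 144 * a^5 / b" by (simp add: add_divide_distrib[symmetric])
    then show ?thesis using e1 e2 e3 by linarith
  qed
  also have "\<dots> \<le> 400 * a^5 / b" using a b by (simp add: field_simps)
  finally show ?thesis .
qed

lemma range_facts:
  fixes d k :: int and x :: real
  assumes d: "d > 0" and dx: "real_of_int d \<le> x / 2" and k1: "K d x - d < k" and k2: "k \<le> K d x"
  shows "k > 0" "1 \<le> \<lfloor>x / real_of_int k\<rfloor>"
    "\<bar>real_of_int \<lfloor>x / real_of_int k\<rfloor> - sqrt (x / real_of_int d)\<bar> \<le> 2"
    "sqrt (x / real_of_int d) \<le> 3 * real_of_int \<lfloor>x / real_of_int k\<rfloor>"
proof -
  define D where "D = real_of_int d"
  have D: "D \<ge> 1" using d by (simp add: D_def)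
  have x: "x \<ge> 2 * D" using dx by (simp add: D_def)
  define s where "s = sqrt (D^2 + 4 * D * x)"
  have nn: "0 \<le> D^2 + 4 * D * x" using D x by (intro add_nonneg_nonneg mult_nonneg_nonneg) auto
  have s2: "s^2 = D^2 + 4 * D * x" using nn unfolding s_def by simp
  have s0: "s \<ge> 0" using nn unfolding s_def by simp
  have sD: "s > D"
  proof -
    have "D^2 < s^2" using s2 D x by simp
    then show ?thesis using s0 by (rule power2_less_imp_less)
  qed
  define r where "r = (s - D) / 2"
  have r0: "r > 0" using sD by (simp add: r_def)
  have rr: "r * (r + D) = D * x"
  proof -
    have "r * (r + D) = (s^2 - D^2) / 4" by (simp add: r_def field_simps power2_eq_square)
    then show ?thesis using s2 by simp
  qed
  have KK: "K d x = \<lfloor>(D + s) / 2\<rfloor>" by (simp add: K_def D_def s_def)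
  have kle: "real_of_int k \<le> r + D"
  proof -
    have "real_of_int k \<le> real_of_int (K d x)" using k2 by simp
    also have "\<dots> \<le> (D + s) / 2" unfolding KK by (rule of_int_floor_le)
    finally show ?thesis by (simp add: r_def field_simps)
  qed
  have kgt: "real_of_int k > r"
  proof -
    have "k \<ge> K d x - d + 1" using k1 by simp
    then have "real_of_int k \<ge> real_of_int (K d x) - D + 1" by (simp add: D_def)
    moreover have "(D + s) / 2 < real_of_int (K d x) + 1" unfolding KK by linarith
    ultimately show ?thesis by (simp add: r_def field_simps)
  qed
  show kpos: "k > 0" using kgt r0 by linarith
  define u where "u = r / D"
  have u0: "u > 0" using r0 D by (simp add: u_def)
  have xeq: "x = r * (r + D) / D" using rr D by (simp add: field_simps)
  have lo: "x / real_of_int k \<ge> u"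
  proof -
    have "x / (r + D) \<le> x / real_of_int k"
      using kle kgt r0 x D by (intro divide_left_mono) auto
    moreover have "x / (r + D) = u"
    proof -
      have "r + D \<noteq> 0" "D \<noteq> 0" using r0 D by auto
      then show ?thesis by (simp add: xeq u_def)
    qed
    ultimately show ?thesis by simp
  qed
  have hi: "x / real_of_int k < u + 1"
  proof -
    have "x / real_of_int k < x / r"
      using kle kgt r0 x D by (intro divide_strict_left_mono) auto
    moreover have "x / r = u + 1"
    proof -
      have "r \<noteq> 0" "D \<noteq> 0" using r0 D by auto
      then show ?thesis by (simp add: xeq u_def field_simps)
    qed
    ultimately show ?thesis by simp
  qed
  have uu: "u * (u + 1) = x / D" using r0 D by (simp add: xeq u_def field_simps power2_eq_square)
  have u1: "u \<ge> 1"
  proof (rule ccontr)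
    assume "\<not> u \<ge> 1"
    then have "u * (u + 1) < 1 * 2" using u0 by (intro mult_strict_mono) auto
    moreover have "x / D \<ge> 2" using x D by (simp add: field_simps)
    ultimately show False using uu by simp
  qed
  define m where "m = \<lfloor>x / real_of_int k\<rfloor>"
  have mle: "real_of_int m \<le> x / real_of_int k" unfolding m_def by simp
  have mgt: "real_of_int m > x / real_of_int k - 1" unfolding m_def by linarith
  define m0 where "m0 = sqrt (x / D)"
  have m0lo: "u < m0"
  proof -
    have "u^2 < x / D" using uu u0 by (simp add: power2_eq_square algebra_simps)
    then show ?thesis unfolding m0_def using u0 real_less_rsqrt by blast
  qed
  have m0hi: "m0 < u + 1"
  proof -
    have "x / D < (u+1)^2" using uu u0 by (simp add: power2_eq_square algebra_simps)
    from real_sqrt_less_mono[OF this] show ?thesis unfolding m0_def using u0 by simp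
  qed
  have "real_of_int m > 0" using mgt lo u1 by linarith
  then show m1: "1 \<le> \<lfloor>x / real_of_int k\<rfloor>" unfolding m_def by simp
  show "\<bar>real_of_int \<lfloor>x / real_of_int k\<rfloor> - sqrt (x / real_of_int d)\<bar> \<le> 2"
    using mle mgt lo hi m0lo m0hi unfolding m_def[symmetric] m0_def D_def by linarith
  show "sqrt (x / real_of_int d) \<le> 3 * real_of_int \<lfloor>x / real_of_int k\<rfloor>"
  proof (cases "u \<ge> 2")
    case True
    then show ?thesis using mle mgt lo hi m0lo m0hi unfolding m_def[symmetric] m0_def D_def by linarith
  next
    case False
    have "real_of_int m \<ge> 1" using m1 unfolding m_def by simp
    then show ?thesis using False m0hi unfolding m_def[symmetric] m0_def D_def by linarith
  qed
qed

lemma F_eq: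
  assumes "1 \<le> \<lfloor>t\<rfloor>"
  shows "F t = infsum ff {nat \<lfloor>t\<rfloor>..}"
proof -
  have "{n. 0 < n \<and> t - 1 < real n} = {nat \<lfloor>t\<rfloor>..}"
  proof (intro set_eqI iffI)
    fix n assume "n \<in> {n. 0 < n \<and> t - 1 < real n}"
    then have "t < real n + 1" by auto
    then have "\<lfloor>t\<rfloor> < int n + 1" by (intro floor_less_iff[THEN iffD2]) simp
    then show "n \<in> {nat \<lfloor>t\<rfloor>..}" by auto
  next
    fix n assume "n \<in> {nat \<lfloor>t\<rfloor>..}"
    then have "\<lfloor>t\<rfloor> \<le> int n" using assms by auto
    then have "t < real n + 1" using floor_less_iff[of t "int n + 1"] by simp
    moreover have "(1::int) \<le> int n" using \<open>\<lfloor>t\<rfloor> \<le> int n\<close> assms by linarith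
    then have "0 < n" by simp
    ultimately show "n \<in> {n. 0 < n \<and> t - 1 < real n}" by auto
  qed
  then show ?thesis unfolding F_def ff_def by simp
qed

lemma term_bound:
  fixes d k :: int and x :: real
  assumes d: "d > 0" and dx: "real_of_int d \<le> x / 2" and k1: "K d x - d < k" and k2: "k \<le> K d x"
  shows "\<bar>(real_of_int d)^2 * real_of_int \<lfloor>x / real_of_int k\<rfloor>
          + 2 * real_of_int d * x / real_of_int \<lfloor>x / real_of_int k\<rfloor>
          - x^2 * F (x / real_of_int k) - 8 / 3 * sqrt (real_of_int d) ^ 3 * sqrt x\<bar>
     \<le> 400 * sqrt (real_of_int d) ^ 5 / sqrt x"
proof -
  note R = range_facts[OF d dx k1 k2]
  define D where "D = real_of_int d"
  define m where "m = \<lfloor>x / real_of_int k\<rfloor>"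
  define a where "a = sqrt D"
  define b where "b = sqrt x"
  have D: "D \<ge> 1" using d by (simp add: D_def)
  have x: "x \<ge> 2 * D" using dx by (simp add: D_def)
  have a: "a > 0" using D by (simp add: a_def)
  have b: "b > 0" using D x by (simp add: b_def)
  have ab: "a \<le> b" using D x by (simp add: a_def b_def)
  have a2: "a^2 = D" using D by (simp add: a_def)
  have b2: "b^2 = x" using D x by (simp add: b_def)
  have ba: "b / a = sqrt (x / D)" by (simp add: a_def b_def real_sqrt_divide)
  have m1: "1 \<le> m" using R(2) by (simp add: m_def)
  have rm: "real (nat m) = real_of_int m" using m1 by simp
  have nm: "1 \<le> nat m" using m1 by simp
  have Feq: "F (x / real_of_int k) = infsum ff {nat m..}" using F_eq R(2) by (simp add: m_def)
  note GB = G_bounds[OF nm, unfolded rm]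
  have P: "\<bar>a^4 * real_of_int m + 2 * a^2 * b^2 / real_of_int m - b^4 * infsum ff {nat m..} - 8 / 3 * a^3 * b\<bar> \<le> 400 * a^5 / b"
    by (rule per_term[OF a b ab _ _ _ GB]) (use m1 R(3) R(4) in \<open>auto simp: ba D_def m_def\<close>)
  have e1: "a^4 = D^2" using a2 by (simp flip: a2 add: power_mult[symmetric])
  have e2: "b^4 = x^2" using b2 by (simp flip: b2 add: power_mult[symmetric])
  show ?thesis using P unfolding Feq[symmetric] m_def[symmetric] D_def[symmetric] a_def[symmetric] b_def[symmetric]
    by (simp add: e1 e2 a2 b2)
qed

theorem proposition7:
  "\<exists>C1 C2::real. \<forall>(d::int) (x::real). 0 < d \<and> real_of_int d \<le> x / 2 \<longrightarrow>
     \<bar>(\<Sum>k\<in>{K d x - d<..K d x}.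
          (real_of_int d)^2 * real_of_int \<lfloor>x / real_of_int k\<rfloor>
          + 2 * real_of_int d * x / real_of_int \<lfloor>x / real_of_int k\<rfloor>
          - x^2 * F (x / real_of_int k))
       - 8 / 3 * (real_of_int d)^2 * sqrt (real_of_int d * x)\<bar>
     \<le> C1 * real_of_int d powr (7/2) * x powr (-1/2) + C2 * (real_of_int d)^2"
proof (intro exI allI impI)
  fix d :: int and x :: real
  assume as: "0 < d \<and> real_of_int d \<le> x / 2"
  then have d: "d > 0" and dx: "real_of_int d \<le> x / 2" by auto
  define D where "D = real_of_int d"
  define A where "A = sqrt D"
  define B where "B = sqrt x"
  have D: "D \<ge> 1" using d by (simp add: D_def)
  have x: "x \<ge> 2 * D" using dx by (simp add: D_def)
  have A: "A > 0" using D by (simp add: A_def)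
  have B: "B > 0" using D x by (simp add: B_def)
  have A2: "A^2 = D" using D by (simp add: A_def)
  define t where "t k = (real_of_int d)^2 * real_of_int \<lfloor>x / real_of_int k\<rfloor>
          + 2 * real_of_int d * x / real_of_int \<lfloor>x / real_of_int k\<rfloor>
          - x^2 * F (x / real_of_int k)" for k
  define c where "c = 8 / 3 * A ^ 3 * B"
  define S where "S = {K d x - d<..K d x}"
  have cardS: "real (card S) = D" using d by (simp add: S_def D_def)
  have tb: "\<bar>t k - c\<bar> \<le> 400 * A ^ 5 / B" if "k \<in> S" for k
    using term_bound[OF d dx] that unfolding t_def c_def A_def B_def D_def S_def by auto
  have main: "8 / 3 * (real_of_int d)^2 * sqrt (real_of_int d * x) = (\<Sum>k\<in>S. c)"
  proof -
    have "sqrt (D * x) = A * B" by (simp add: A_def B_def real_sqrt_mult)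
    moreover have "D^2 = A^4" using A2 by (simp flip: A2 add: power_mult[symmetric])
    ultimately have "8 / 3 * D^2 * sqrt (D * x) = D * c"
      unfolding c_def using A2 by (simp flip: A2 add: eval_nat_numeral field_simps)
    then show ?thesis using cardS by (simp add: D_def)
  qed
  have "\<bar>(\<Sum>k\<in>S. t k) - (\<Sum>k\<in>S. c)\<bar> = \<bar>\<Sum>k\<in>S. t k - c\<bar>" by (simp add: sum_subtractf)
  also have "\<dots> \<le> (\<Sum>k\<in>S. \<bar>t k - c\<bar>)" by (rule sum_abs)
  also have "\<dots> \<le> (\<Sum>k\<in>S. 400 * A ^ 5 / B)" by (rule sum_mono) (rule tb)
  also have "\<dots> = D * (400 * A ^ 5 / B)" using cardS by simp
  also have "\<dots> = 400 * D powr (7/2) * x powr (-1/2) + 0 * D^2"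
  proof -
    have e: "(7/2::real) = 3 + 1/2" by simp
    have "D powr (7/2) = D powr 3 * D powr (1/2)" unfolding e by (rule powr_add)
    then have p1: "D powr (7/2) = D^3 * A" using D by (simp add: powr_half_sqrt A_def)
    have "x powr (-1/2) = 1 / B" using x D by (simp add: powr_minus_divide powr_half_sqrt B_def)
    moreover have "D * A^5 = D^3 * A" using A2 by (simp flip: A2 add: eval_nat_numeral)
    ultimately show ?thesis using p1 by simp
  qed
  finally show "\<bar>(\<Sum>k\<in>{K d x - d<..K d x}. (real_of_int d)^2 * real_of_int \<lfloor>x / real_of_int k\<rfloor>
          + 2 * real_of_int d * x / real_of_int \<lfloor>x / real_of_int k\<rfloor>
          - x^2 * F (x / real_of_int k))
       - 8 / 3 * (real_of_int d)^2 * sqrt (real_of_int d * x)\<bar>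
     \<le> 400 * real_of_int d powr (7/2) * x powr (-1/2) + 0 * (real_of_int d)^2"
    unfolding main unfolding t_def S_def D_def by simp
qed

end
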